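(* Let $S=\{0,1,\dots,p-1\}$ with $p\ge 2$, let $m\ge 2$, and let $f:S^m\to S$ be a local rule. If there exists a pair of replaceable local configurations for $f$, then there exists a pair of periodic local configurations for $f$.
   Context: A local configuration is a finite word over $S$. For a word $w=w_1w_2\cdots w_n$ with $n\ge m$, its successor under $f$ is the word $\hat f(w)=u_1\cdots u_{n-m+1}$ with $u_j=f(w_j,w_{j+1},\dots,w_{j+m-1})$. For $k\le n$, $\mathrm{left}_k(w)=w_1\cdots w_k$ and $\mathrm{right}_k(w)=w_{n-k+1}\cdots w_n$. Two local configurations $\alpha,\beta$ of the same length $n$ are replaceable if: $n\ge 2m-1$; $\alpha\ne\beta$; $\mathrm{left}_{m-1}(\alpha)=\mathrm{left}_{m-1}(\beta)$; $\mathrm{right}_{m-1}(\alpha)=\mathrm{right}_{m-1}(\beta)$; and $\hat f(\alpha)=\hat f(\beta)$. They are periodic if: $n\ge m$; $\alpha\ne\beta$; $\mathrm{left}_{m-1}(\alpha)=\mathrm{right}_{m-1}(\alpha)$; $\mathrm{left}_{m-1}(\beta)=\mathrm{right}_{m-1}(\beta)$; and $\hat f(\alpha)=\hat f(\beta)$. *)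

theory Defs
  imports Main
begin

text \<open>Alphabet S = {0..<p}; local configurations are finite words (lists) over S.
  A local rule f : S^m -> S is modelled as a function on lists, only its values on
  length-m words over S matter.\<close>

definition is_word :: "nat \<Rightarrow> nat list \<Rightarrow> bool" where
  "is_word p w \<longleftrightarrow> (\<forall>x \<in> set w. x < p)"

definition local_rule :: "nat \<Rightarrow> nat \<Rightarrow> (nat list \<Rightarrow> nat) \<Rightarrow> bool" where
  "local_rule p m f \<longleftrightarrow> (\<forall>w. length w = m \<longrightarrow> is_word p w \<longrightarrow> f w < p)"

text \<open>Successor: u_j = f(w_j ... w_{j+m-1}) for j = 1..n-m+1 (assumes n >= m).\<close>
definition succ :: "nat \<Rightarrow> (nat list \<Rightarrow> nat) \<Rightarrow> nat list \<Rightarrow> nat list" where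
  "succ m f w = map (\<lambda>j. f (take m (drop j w))) [0..<length w - m + 1]"

definition left_k :: "nat \<Rightarrow> nat list \<Rightarrow> nat list" where
  "left_k k w = take k w"

definition right_k :: "nat \<Rightarrow> nat list \<Rightarrow> nat list" where
  "right_k k w = drop (length w - k) w"

definition replaceable :: "nat \<Rightarrow> nat \<Rightarrow> (nat list \<Rightarrow> nat) \<Rightarrow> nat list \<Rightarrow> nat list \<Rightarrow> bool" where
  "replaceable p m f \<alpha> \<beta> \<longleftrightarrow>
     is_word p \<alpha> \<and> is_word p \<beta> \<and> length \<alpha> = length \<beta> \<and>
     length \<alpha> \<ge> 2 * m - 1 \<and> \<alpha> \<noteq> \<beta> \<and>
     left_k (m - 1) \<alpha> = left_k (m - 1) \<beta> \<and>
     right_k (m - 1) \<alpha> = right_k (m - 1) \<beta> \<and>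
     succ m f \<alpha> = succ m f \<beta>"

definition periodic :: "nat \<Rightarrow> nat \<Rightarrow> (nat list \<Rightarrow> nat) \<Rightarrow> nat list \<Rightarrow> nat list \<Rightarrow> bool" where
  "periodic p m f \<alpha> \<beta> \<longleftrightarrow>
     is_word p \<alpha> \<and> is_word p \<beta> \<and> length \<alpha> = length \<beta> \<and>
     length \<alpha> \<ge> m \<and> \<alpha> \<noteq> \<beta> \<and>
     left_k (m - 1) \<alpha> = right_k (m - 1) \<alpha> \<and>
     left_k (m - 1) \<beta> = right_k (m - 1) \<beta> \<and>
     succ m f \<alpha> = succ m f \<beta>"

end

theory Submission
  imports Defs
begin

lemma succ_ext:
  assumes len: "length a = length b" "length a \<ge> 2*m - 1" "m \<ge> 2"
    and r: "drop (length a - (m-1)) a = drop (length b - (m-1)) b"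
    and s: "succ m f a = succ m f b"
  shows "succ m f (a @ L) = succ m f (b @ L)"
proof -
  let ?n = "length a"
  have key: "f (take m (drop j (a @ L))) = f (take m (drop j (b @ L)))"
    if j: "j < length (a@L) - m + 1" for j
  proof (cases "j + m \<le> ?n")
    case True
    have "j < ?n - m + 1" using True by simp
    then have "succ m f a ! j = succ m f b ! j" using s by simp
    then have "f (take m (drop j a)) = f (take m (drop j b))"
      using \<open>j < ?n - m + 1\<close> len by (simp add: succ_def nth_map del: upt_Suc)
    moreover have "take m (drop j (a@L)) = take m (drop j a)"
      using True by simp
    moreover have "take m (drop j (b@L)) = take m (drop j b)"
      using True len by simp
    ultimately show ?thesis using True len by simp
  next
    case False
    then have jj: "j \<ge> ?n - (m-1)" by simp
    have da: "drop j a = drop (j - (?n - (m-1))) (drop (?n - (m-1)) a)"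
      using jj by simp
    have db: "drop j b = drop (j - (?n - (m-1))) (drop (?n - (m-1)) b)"
      using jj by simp
    have "drop j a = drop j b" using da db r len by (simp only:)
    then have "drop j (a@L) = drop j (b@L)" using len by simp
    then show ?thesis by simp
  qed
  show ?thesis
    unfolding succ_def using key len by (intro map_cong) auto
qed

theorem lemma5:
  fixes p m :: nat and f :: "nat list \<Rightarrow> nat"
  assumes "p \<ge> 2" and "m \<ge> 2" and "local_rule p m f"
    and "\<exists>\<alpha> \<beta>. replaceable p m f \<alpha> \<beta>"
  shows "\<exists>\<alpha> \<beta>. periodic p m f \<alpha> \<beta>"
proof -
  obtain a b where R: "replaceable p m f a b" using assms(4) by blast
  let ?L = "take (m-1) a"
  have wa: "is_word p a" and wb: "is_word p b" and len: "length a = length b"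
    and ln: "length a \<ge> 2*m - 1" and ne: "a \<noteq> b"
    and rr: "drop (length a - (m-1)) a = drop (length b - (m-1)) b"
    and s: "succ m f a = succ m f b"
    using R by (auto simp: replaceable_def right_k_def)
  have sL: "succ m f (a @ ?L) = succ m f (b @ ?L)"
    using succ_ext[OF len ln assms(2) rr s] .
  have "periodic p m f (a @ ?L) (b @ ?L)"
    unfolding periodic_def left_k_def right_k_def
  proof (intro conjI)
    show "is_word p (a @ ?L)" using wa by (auto simp: is_word_def dest: in_set_takeD)
    show "is_word p (b @ ?L)" using wa wb by (auto simp: is_word_def dest: in_set_takeD)
    show "length (a @ ?L) = length (b @ ?L)" using len by simp
    show "m \<le> length (a @ ?L)" using ln assms(2) by simp
    show "a @ ?L \<noteq> b @ ?L" using ne by simp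
    show "take (m - 1) (a @ ?L) = drop (length (a @ ?L) - (m - 1)) (a @ ?L)"
      using ln assms(2) by simp
    show "take (m - 1) (b @ ?L) = drop (length (b @ ?L) - (m - 1)) (b @ ?L)"
    proof -
      have "take (m-1) b = ?L" using R by (simp add: replaceable_def left_k_def)
      then show ?thesis using ln len assms(2) by simp
    qed
    show "succ m f (a @ ?L) = succ m f (b @ ?L)" by (rule sL)
  qed
  then show ?thesis by blast
qed

end
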